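(* For $\xi\in\mathbb{R}$ and $\psi\in H_0^2((-1,1))$ let $E_0'(\psi)=\frac12\int_{-1}^1|B|^2(\xi^2|\psi|^2+|\psi'|^2)dx_2-\frac12g[\rho]\psi(0)^2$. Then: (i) if $|B|\ge|B|_c$, then $E_0'(\psi)\ge0$ for every $\psi$, and moreover $E_0'(\psi)\ge\frac12\int_{-1}^1\big((|B|^2-|B|_c^2)|\psi'|^2+|B|^2\xi^2|\psi|^2\big)dx_2$; (ii) if $|B|<|B|_c$ and $|\xi|\ge|\xi|^B_{hc}$, then $E_0'(\psi)\ge0$ for every $\psi$; (iii) if $|B|<|B|_c$ and $0<|\xi|<|\xi|^B_{hc}$, then there exists $\psi$ with $E_0'(\psi)<0$.
   Context: $g>0$, $[\rho]>0$, $B\ne0$ constants. $|B|_c^2:=\sup\{g[\rho]\psi(0)^2/\int_{-1}^1|\psi'|^2dx_2: 0\ne\psi\in H_0^1((-1,1))\}$; for $|B|<|B|_c$, $(|\xi|^B_{hc})^2:=\sup\{(g[\rho]\psi(0)^2-|B|^2\int_{-1}^1|\psi'|^2dx_2)/(|B|^2\int_{-1}^1|\psi|^2dx_2): 0\ne\psi\in H_0^1((-1,1))\}$. *)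

theory Defs
  imports "HOL-Analysis.Analysis"
begin

text \<open>One-dimensional Sobolev space H_0^1((-1,1)), via the (absolutely) continuous
representative: psi belongs to H_0^1 with weak derivative dpsi iff dpsi is square
integrable on (-1,1), psi(x) = integral of dpsi from -1 to x on [-1,1], and psi(1) = 0
(so psi vanishes at both endpoints).\<close>
definition H01_deriv :: "(real \<Rightarrow> real) \<Rightarrow> (real \<Rightarrow> real) \<Rightarrow> bool" where
  "H01_deriv \<psi> d\<psi> \<longleftrightarrow>
     set_borel_measurable lborel {-1..1} d\<psi> \<and>
     set_integrable lborel {-1..1} (\<lambda>x. (d\<psi> x)\<^sup>2) \<and>
     (\<forall>x\<in>{-1..1}. \<psi> x = (LBINT t=-1..x. d\<psi> t)) \<and>
     \<psi> 1 = 0"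

definition H02_derivs :: "(real \<Rightarrow> real) \<Rightarrow> (real \<Rightarrow> real) \<Rightarrow> (real \<Rightarrow> real) \<Rightarrow> bool" where
  "H02_derivs \<psi> d\<psi> dd\<psi> \<longleftrightarrow> H01_deriv \<psi> d\<psi> \<and> H01_deriv d\<psi> dd\<psi>"

definition nonzero_on :: "(real \<Rightarrow> real) \<Rightarrow> bool" where
  "nonzero_on \<psi> \<longleftrightarrow> (\<exists>x\<in>{-1..1}. \<psi> x \<noteq> 0)"

definition Bc_sq :: "real \<Rightarrow> real \<Rightarrow> real" where
  "Bc_sq g rho = Sup {g * rho * (\<psi> 0)\<^sup>2 / (LBINT x=-1..1. (d\<psi> x)\<^sup>2) | \<psi> d\<psi>.
                      H01_deriv \<psi> d\<psi> \<and> nonzero_on \<psi>}"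

definition Bc :: "real \<Rightarrow> real \<Rightarrow> real" where
  "Bc g rho = sqrt (Bc_sq g rho)"

definition xi_hc_sq :: "real \<Rightarrow> real \<Rightarrow> real \<Rightarrow> real" where
  "xi_hc_sq g rho nB = Sup {(g * rho * (\<psi> 0)\<^sup>2 - nB\<^sup>2 * (LBINT x=-1..1. (d\<psi> x)\<^sup>2))
                          / (nB\<^sup>2 * (LBINT x=-1..1. (\<psi> x)\<^sup>2)) | \<psi> d\<psi>.
                      H01_deriv \<psi> d\<psi> \<and> nonzero_on \<psi>}"

definition xi_hc :: "real \<Rightarrow> real \<Rightarrow> real \<Rightarrow> real" where
  "xi_hc g rho nB = sqrt (xi_hc_sq g rho nB)"

definition E0' :: "real \<Rightarrow> real \<Rightarrow> real \<Rightarrow> real \<Rightarrow> (real \<Rightarrow> real) \<Rightarrow> (real \<Rightarrow> real) \<Rightarrow> real" where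
  "E0' g rho nB \<xi> \<psi> d\<psi> =
     1/2 * (LBINT x=-1..1. nB\<^sup>2 * (\<xi>\<^sup>2 * (\<psi> x)\<^sup>2 + (d\<psi> x)\<^sup>2)) - 1/2 * g * rho * (\<psi> 0)\<^sup>2"

end

theory Submission
  imports Defs
begin


lemma ereal_m1: "(-1::ereal) = ereal (-1)" "(1::ereal) = ereal 1" by (metis one_ereal_def uminus_ereal.simps(1)) simp

lemma H01_basic:
  assumes "H01_deriv \<psi> d"
  shows "(\<lambda>x. (d x)\<^sup>2) integrable_on {-1..1}"
    and "d integrable_on {-1..1}"
    and "\<And>x. x \<in> {-1..1} \<Longrightarrow> \<psi> x = integral {-1..x} d"
    and "continuous_on {-1..1} \<psi>"
    and "\<psi> 1 = 0" and "\<psi> (-1) = 0"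
    and "(LBINT x=-1..1. (d x)\<^sup>2) = integral {-1..1} (\<lambda>x. (d x)\<^sup>2)"
proof -
  have m: "set_borel_measurable lborel {-1..1} d" and i2: "set_integrable lborel {-1..1} (\<lambda>x. (d x)\<^sup>2)"
    and rep: "\<forall>x\<in>{-1..1}. \<psi> x = (LBINT t=-1..x. d t)" and z: "\<psi> 1 = 0"
    using assms by (auto simp: H01_deriv_def)
  show "(\<lambda>x. (d x)\<^sup>2) integrable_on {-1..1}" using set_borel_integral_eq_integral(1)[OF i2] .
  show "(LBINT x=-1..1. (d x)\<^sup>2) = integral {-1..1} (\<lambda>x. (d x)\<^sup>2)"
    using interval_integral_eq_integral[OF _ i2] by (simp add: ereal_m1)
  have c: "set_integrable lborel {-1..1} (\<lambda>x. (1 + (d x)\<^sup>2) / 2)"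
  proof -
    have a: "set_integrable lborel {-1..1} (\<lambda>x::real. 1/2::real)"
      by (rule borel_integrable_atLeastAtMost') (auto intro: continuous_intros)
    have b: "set_integrable lborel {-1..1} (\<lambda>x. 1/2 * (d x)\<^sup>2)"
      using i2 by simp
    have "set_integrable lborel {-1..1} (\<lambda>x. 1/2 + 1/2 * (d x)\<^sup>2)"
      using set_integral_add(1)[OF a b] .
    thus ?thesis by (simp add: add_divide_distrib)
  qed
  have id: "set_integrable lborel {-1..1} d"
  proof (rule set_integrable_bound[OF c m])
    show "AE x in lborel. x \<in> {-1..1} \<longrightarrow> norm (d x) \<le> norm ((1 + (d x)\<^sup>2) / 2)"
    proof (rule AE_I2, safe)
      fix x :: real
      have "0 \<le> (\<bar>d x\<bar> - 1)\<^sup>2" by simp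
      hence "\<bar>d x\<bar> \<le> (1 + (d x)\<^sup>2) / 2" by (simp add: power2_eq_square algebra_simps)
      thus "norm (d x) \<le> norm ((1 + (d x)\<^sup>2) / 2)" by simp
    qed
  qed
  show di: "d integrable_on {-1..1}" using set_borel_integral_eq_integral(1)[OF id] .
  show rep2: "\<And>x. x \<in> {-1..1} \<Longrightarrow> \<psi> x = integral {-1..x} d"
  proof -
    fix x :: real assume x: "x \<in> {-1..1}"
    have "set_integrable lborel {-1..x} d" by (rule set_integrable_subset[OF id]) (use x in auto)
    thus "\<psi> x = integral {-1..x} d" using rep x interval_integral_eq_integral[of "-1" x d] by (auto simp: ereal_m1)
  qed
  show "continuous_on {-1..1} \<psi>"
    using indefinite_integral_continuous_1[OF di] by (rule continuous_on_eq) (simp add: rep2)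
  show "\<psi> 1 = 0" by fact
  show "\<psi> (-1) = 0" using rep2[of "-1"] by simp
qed

lemma jensen_int:
  fixes f :: "real \<Rightarrow> real"
  assumes ab: "a \<le> b" and f: "f integrable_on {a..b}" and f2: "(\<lambda>x. (f x)\<^sup>2) integrable_on {a..b}"
  shows "(integral {a..b} f)\<^sup>2 \<le> (b - a) * integral {a..b} (\<lambda>x. (f x)\<^sup>2)"
proof (cases "a = b")
  case True thus ?thesis by simp
next
  case False
  hence ab': "b - a > 0" using ab by simp
  define I where "I = integral {a..b} f"
  define I2 where "I2 = integral {a..b} (\<lambda>x. (f x)\<^sup>2)"
  define c where "c = I / (b - a)"
  have h: "((\<lambda>x. (f x)\<^sup>2 - 2 * c * f x + c\<^sup>2) has_integral (I2 - 2 * c * I + (b - a) * c\<^sup>2)) {a..b}"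
    using has_integral_add[OF has_integral_diff[OF integrable_integral[OF f2] has_integral_mult_right[OF integrable_integral[OF f], of "2*c"]] has_integral_const_real[of "c\<^sup>2" a b]]
    using ab by (simp add: I_def I2_def)
  have "0 \<le> I2 - 2 * c * I + (b - a) * c\<^sup>2"
  proof (rule has_integral_nonneg[OF h])
    fix x show "0 \<le> (f x)\<^sup>2 - 2 * c * f x + c\<^sup>2"
      using zero_le_power2[of "f x - c"] by (simp add: power2_eq_square algebra_simps)
  qed
  also have "I2 - 2 * c * I + (b - a) * c\<^sup>2 = I2 - I\<^sup>2 / (b - a)"
  proof -
    have "\<And>t. t > 0 \<Longrightarrow> I2 - 2 * (I / t) * I + t * (I / t)\<^sup>2 = I2 - I\<^sup>2 / t"
      by (simp add: field_simps power2_eq_square)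
    from this[OF ab'] show ?thesis by (simp add: c_def)
  qed
  finally show ?thesis using ab' by (simp add: I_def I2_def field_simps)
qed

lemma H01_sub:
  assumes "H01_deriv \<psi> d" and "-1 \<le> a" "a \<le> b" "b \<le> 1"
  shows "(\<lambda>x. (d x)\<^sup>2) integrable_on {a..b}" and "d integrable_on {a..b}"
    and "\<psi> b - \<psi> a = integral {a..b} d"
    and "(\<psi> b - \<psi> a)\<^sup>2 \<le> (b - a) * integral {a..b} (\<lambda>x. (d x)\<^sup>2)"
    and "integral {a..b} (\<lambda>x. (d x)\<^sup>2) \<le> integral {-1..1} (\<lambda>x. (d x)\<^sup>2)"
proof -
  note B = H01_basic[OF assms(1)]
  show i2: "(\<lambda>x. (d x)\<^sup>2) integrable_on {a..b}" using B(1) integrable_subinterval_real assms by fastforce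
  show i1: "d integrable_on {a..b}" using B(2) integrable_subinterval_real assms by fastforce
  have "integral {-1..a} d + integral {a..b} d = integral {-1..b} d"
    by (rule Henstock_Kurzweil_Integration.integral_combine) (use assms B(2) integrable_subinterval_real in fastforce)+
  thus e: "\<psi> b - \<psi> a = integral {a..b} d" using B(3)[of a] B(3)[of b] assms by auto
  show "(\<psi> b - \<psi> a)\<^sup>2 \<le> (b - a) * integral {a..b} (\<lambda>x. (d x)\<^sup>2)"
    unfolding e by (rule jensen_int[OF assms(3) i1 i2])
  show "integral {a..b} (\<lambda>x. (d x)\<^sup>2) \<le> integral {-1..1} (\<lambda>x. (d x)\<^sup>2)"
    by (rule integral_subset_le) (use assms i2 B(1) in auto)
qed

lemma H01_ptbound:
  assumes "H01_deriv \<psi> d" and "x \<in> {-1..1}"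
  shows "(\<psi> x)\<^sup>2 \<le> 2 * integral {-1..1} (\<lambda>x. (d x)\<^sup>2)"
    and "(\<psi> 0)\<^sup>2 \<le> integral {-1..1} (\<lambda>x. (d x)\<^sup>2)"
proof -
  note B = H01_basic[OF assms(1)]
  have D0: "0 \<le> integral {-1..1} (\<lambda>x. (d x)\<^sup>2)" by (rule integral_nonneg[OF B(1)]) simp
  have "(\<psi> x - \<psi> (-1))\<^sup>2 \<le> (x - -1) * integral {-1..x} (\<lambda>x. (d x)\<^sup>2)"
    using H01_sub(4)[OF assms(1), of "-1" x] assms by auto
  also have "\<dots> \<le> 2 * integral {-1..1} (\<lambda>x. (d x)\<^sup>2)"
    using H01_sub(5)[OF assms(1), of "-1" x] assms H01_sub(1)[OF assms(1), of "-1" x]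
    by (intro mult_mono) (auto intro: integral_nonneg)
  finally show "(\<psi> x)\<^sup>2 \<le> 2 * integral {-1..1} (\<lambda>x. (d x)\<^sup>2)" using B(6) by simp
  have "(\<psi> 0 - \<psi> (-1))\<^sup>2 \<le> (0 - -1) * integral {-1..0} (\<lambda>x. (d x)\<^sup>2)"
    using H01_sub(4)[OF assms(1), of "-1" 0] by auto
  also have "\<dots> \<le> integral {-1..1} (\<lambda>x. (d x)\<^sup>2)"
    using H01_sub(5)[OF assms(1), of "-1" 0] by simp
  finally show "(\<psi> 0)\<^sup>2 \<le> integral {-1..1} (\<lambda>x. (d x)\<^sup>2)" using B(6) by simp
qed

lemma H01_avg:
  assumes "H01_deriv \<psi> d" and "0 < \<delta>" "\<delta> \<le> 1"
  shows "\<delta> * (\<psi> 0)\<^sup>2 \<le> 2 * integral {-1..1} (\<lambda>x. (\<psi> x)\<^sup>2) + 2 * \<delta>\<^sup>2 * integral {-1..1} (\<lambda>x. (d x)\<^sup>2)"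
proof -
  note B = H01_basic[OF assms(1)]
  define D where "D = integral {-1..1} (\<lambda>x. (d x)\<^sup>2)"
  have c2: "continuous_on {-1..1} (\<lambda>x. (\<psi> x)\<^sup>2)" using B(4) by (intro continuous_intros)
  have i1: "(\<lambda>x. (\<psi> x)\<^sup>2) integrable_on {0..\<delta>}"
    by (rule integrable_continuous_interval, rule continuous_on_subset[OF c2]) (use assms in auto)
  have i2: "(\<lambda>x. (\<psi> x)\<^sup>2) integrable_on {-1..1}" by (rule integrable_continuous_interval[OF c2])
  have pt: "(\<psi> 0)\<^sup>2 \<le> 2 * (\<psi> x)\<^sup>2 + 2 * \<delta> * D" if x: "x \<in> {0..\<delta>}" for x
  proof -
    have "(\<psi> x - \<psi> 0)\<^sup>2 \<le> (x - 0) * integral {0..x} (\<lambda>x. (d x)\<^sup>2)"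
      using H01_sub(4)[OF assms(1), of 0 x] x assms by auto
    also have "\<dots> \<le> \<delta> * D"
      using H01_sub(5)[OF assms(1), of 0 x] x assms H01_sub(1)[OF assms(1), of 0 x] unfolding D_def
      by (intro mult_mono) (auto intro: integral_nonneg)
    finally have "(\<psi> x - \<psi> 0)\<^sup>2 \<le> \<delta> * D" .
    moreover have "(\<psi> 0)\<^sup>2 \<le> 2 * (\<psi> x)\<^sup>2 + 2 * (\<psi> x - \<psi> 0)\<^sup>2"
      using zero_le_power2[of "2 * \<psi> x - \<psi> 0"] by (simp add: power2_eq_square algebra_simps)
    ultimately show ?thesis by linarith
  qed
  have "integral {0..\<delta>} (\<lambda>x. (\<psi> 0)\<^sup>2) \<le> integral {0..\<delta>} (\<lambda>x. 2 * (\<psi> x)\<^sup>2 + 2 * \<delta> * D)"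
    by (rule integral_le) (use pt i1 in \<open>auto intro!: integrable_add integrable_cmul\<close>)
  also have "\<dots> = 2 * integral {0..\<delta>} (\<lambda>x. (\<psi> x)\<^sup>2) + 2 * \<delta>\<^sup>2 * D"
  proof -
    have "((\<lambda>x. 2 * (\<psi> x)\<^sup>2 + 2 * \<delta> * D) has_integral (2 * integral {0..\<delta>} (\<lambda>x. (\<psi> x)\<^sup>2) + 2 * \<delta>\<^sup>2 * D)) {0..\<delta>}"
      using has_integral_add[OF has_integral_mult_right[OF integrable_integral[OF i1], of 2] has_integral_const_real[of "2*\<delta>*D" 0 \<delta>]] assms
      by (simp add: power2_eq_square mult.assoc mult.left_commute)
    thus ?thesis using integral_unique by metis
  qed
  also have "integral {0..\<delta>} (\<lambda>x. (\<psi> x)\<^sup>2) \<le> integral {-1..1} (\<lambda>x. (\<psi> x)\<^sup>2)"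
    by (rule integral_subset_le) (use assms i1 i2 in auto)
  finally show ?thesis using assms unfolding D_def by simp
qed

lemma H01_lin:
  assumes "H01_deriv \<psi> d"
  shows "(LBINT x=-1..1. p * (d x)\<^sup>2 + q * (\<psi> x)\<^sup>2) =
     p * integral {-1..1} (\<lambda>x. (d x)\<^sup>2) + q * integral {-1..1} (\<lambda>x. (\<psi> x)\<^sup>2)"
proof -
  note B = H01_basic[OF assms]
  have i2: "set_integrable lborel {-1..1} (\<lambda>x. (d x)\<^sup>2)" using assms by (simp add: H01_deriv_def)
  have c2: "continuous_on {-1..1} (\<lambda>x. (\<psi> x)\<^sup>2)" using B(4) by (intro continuous_intros)
  have j2: "set_integrable lborel {-1..1} (\<lambda>x. (\<psi> x)\<^sup>2)" by (rule borel_integrable_atLeastAtMost'[OF c2])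
  have s: "set_integrable lborel {-1..1} (\<lambda>x. p * (d x)\<^sup>2 + q * (\<psi> x)\<^sup>2)"
    by (rule set_integral_add(1)) (use i2 j2 in auto)
  have "(LBINT x=-1..1. p * (d x)\<^sup>2 + q * (\<psi> x)\<^sup>2) = integral {-1..1} (\<lambda>x. p * (d x)\<^sup>2 + q * (\<psi> x)\<^sup>2)"
    using interval_integral_eq_integral[OF _ s] by (simp add: ereal_m1)
  also have "\<dots> = p * integral {-1..1} (\<lambda>x. (d x)\<^sup>2) + q * integral {-1..1} (\<lambda>x. (\<psi> x)\<^sup>2)"
    by (intro integral_unique has_integral_add has_integral_mult_right integrable_integral B(1) integrable_continuous_interval c2)
  finally show ?thesis .
qed

lemma E0'_eq:
  assumes "H01_deriv \<psi> d"
  shows "E0' g rho nB \<xi> \<psi> d = 1/2 * (nB\<^sup>2 * \<xi>\<^sup>2 * integral {-1..1} (\<lambda>x. (\<psi> x)\<^sup>2) + nB\<^sup>2 * integral {-1..1} (\<lambda>x. (d x)\<^sup>2)) - 1/2 * g * rho * (\<psi> 0)\<^sup>2"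
proof -
  have "(\<lambda>x. nB\<^sup>2 * (\<xi>\<^sup>2 * (\<psi> x)\<^sup>2 + (d x)\<^sup>2)) = (\<lambda>x. nB\<^sup>2 * (d x)\<^sup>2 + (nB\<^sup>2 * \<xi>\<^sup>2) * (\<psi> x)\<^sup>2)"
    by (simp add: algebra_simps)
  thus ?thesis unfolding E0'_def using H01_lin[OF assms, of "nB\<^sup>2" "nB\<^sup>2 * \<xi>\<^sup>2"] by (simp add: algebra_simps)
qed

lemma H01_Dnn: "H01_deriv \<psi> d \<Longrightarrow> 0 \<le> integral {-1..1} (\<lambda>x. (d x)\<^sup>2)"
  by (rule integral_nonneg[OF H01_basic(1)]) auto

lemma H01_Inn: "H01_deriv \<psi> d \<Longrightarrow> 0 \<le> integral {-1..1} (\<lambda>x. (\<psi> x)\<^sup>2)"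
  by (rule integral_nonneg) (auto intro!: integrable_continuous_interval continuous_intros intro: H01_basic(4))

lemma H01_Dpos:
  assumes "H01_deriv \<psi> d" "nonzero_on \<psi>"
  shows "0 < integral {-1..1} (\<lambda>x. (d x)\<^sup>2)"
proof (rule ccontr)
  assume "\<not> ?thesis"
  hence "integral {-1..1} (\<lambda>x. (d x)\<^sup>2) = 0" using H01_Dnn[OF assms(1)] by simp
  moreover obtain x where "x \<in> {-1..1}" "\<psi> x \<noteq> 0" using assms(2) by (auto simp: nonzero_on_def)
  ultimately show False using H01_ptbound(1)[OF assms(1), of x] by simp
qed

lemma H01_I0:
  assumes "H01_deriv \<psi> d" "integral {-1..1} (\<lambda>x. (\<psi> x)\<^sup>2) = 0"
  shows "\<psi> 0 = 0"
proof (rule ccontr)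
  assume nz: "\<psi> 0 \<noteq> 0"
  define D where "D = integral {-1..1} (\<lambda>x. (d x)\<^sup>2)"
  have D: "0 \<le> D" using H01_Dnn[OF assms(1)] by (simp add: D_def)
  define \<delta> where "\<delta> = min 1 ((\<psi> 0)\<^sup>2 / (4 * D + 1))"
  have p: "0 < (\<psi> 0)\<^sup>2" using nz by simp
  have dpos: "0 < \<delta>" "\<delta> \<le> 1" using p D by (auto simp: \<delta>_def)
  have "\<delta> * (\<psi> 0)\<^sup>2 \<le> 2 * \<delta>\<^sup>2 * D" using H01_avg[OF assms(1) dpos] assms(2) by (simp add: D_def)
  hence "(\<psi> 0)\<^sup>2 \<le> 2 * \<delta> * D" using dpos by (simp add: power2_eq_square)
  also have "\<dots> \<le> 2 * ((\<psi> 0)\<^sup>2 / (4 * D + 1)) * D" using D by (intro mult_right_mono mult_left_mono) (auto simp: \<delta>_def)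
  also have "\<dots> = (\<psi> 0)\<^sup>2 * (2 * D / (4 * D + 1))" by simp
  also have "\<dots> < (\<psi> 0)\<^sup>2 * 1"
  proof (rule mult_strict_left_mono[OF _ p])
    show "2 * D / (4 * D + 1) < 1" using D by (simp add: divide_less_eq)
  qed
  also have "\<dots> = (\<psi> 0)\<^sup>2" by simp
  finally show False by simp
qed

lemma witness_H01: "H01_deriv (\<lambda>x. 1 - x\<^sup>2) (\<lambda>x. - 2 * x)" "nonzero_on (\<lambda>x::real. 1 - x\<^sup>2)"
proof -
  show "nonzero_on (\<lambda>x::real. 1 - x\<^sup>2)" unfolding nonzero_on_def by (rule bexI[of _ 0]) auto
  have F: "(LBINT t=(ereal (-1))..(ereal x). - 2 * t) = (1::real) - x\<^sup>2" if x: "-1 \<le> x" "x \<le> 1" for x :: real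
  proof -
    have "(LBINT t=(ereal (-1))..(ereal x). - 2 * t) = (- x\<^sup>2) - (- (-1)\<^sup>2)"
      by (rule interval_integral_FTC_finite) (auto intro!: continuous_intros derivative_eq_intros simp flip: has_real_derivative_iff_has_vector_derivative)
    thus ?thesis by simp
  qed
  show "H01_deriv (\<lambda>x. 1 - x\<^sup>2) (\<lambda>x. - 2 * x)"
    unfolding H01_deriv_def
    apply (intro conjI)
    subgoal unfolding set_borel_measurable_def by measurable
    subgoal by (rule borel_integrable_atLeastAtMost') (auto intro!: continuous_intros)
    subgoal unfolding ereal_m1(1) by (intro ballI, rule F[symmetric]) auto
    subgoal by simp
    done
qed

lemma H01_Ilbint: "H01_deriv \<psi> d \<Longrightarrow> (LBINT x=-1..1. (\<psi> x)\<^sup>2) = integral {-1..1} (\<lambda>x. (\<psi> x)\<^sup>2)"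
  using H01_lin[of \<psi> d 0 1] by simp

lemma Bc_bdd:
  assumes "g > 0" "rho > 0"
  shows "bdd_above {g * rho * (\<psi> 0)\<^sup>2 / (LBINT x=-1..1. (d\<psi> x)\<^sup>2) | \<psi> d\<psi>. H01_deriv \<psi> d\<psi> \<and> nonzero_on \<psi>}"
proof (rule bdd_aboveI[of _ "g * rho"], safe)
  fix \<psi> d assume h: "H01_deriv \<psi> d" "nonzero_on \<psi>"
  have D: "0 < integral {-1..1} (\<lambda>x. (d x)\<^sup>2)" by (rule H01_Dpos[OF h])
  have "g * rho * (\<psi> 0)\<^sup>2 \<le> g * rho * integral {-1..1} (\<lambda>x. (d x)\<^sup>2)"
    using H01_ptbound(2)[OF h(1), of 0] assms by simp
  thus "g * rho * (\<psi> 0)\<^sup>2 / (LBINT x=-1..1. (d x)\<^sup>2) \<le> g * rho"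
    using D by (simp add: H01_basic(7)[OF h(1)] divide_le_eq)
qed

lemma Bc_facts:
  assumes "g > 0" "rho > 0"
  shows "0 \<le> Bc_sq g rho" and "(Bc g rho)\<^sup>2 = Bc_sq g rho"
    and "\<And>\<psi> d. H01_deriv \<psi> d \<Longrightarrow> g * rho * (\<psi> 0)\<^sup>2 \<le> Bc_sq g rho * integral {-1..1} (\<lambda>x. (d x)\<^sup>2)"
proof -
  note bdd = Bc_bdd[OF assms]
  have up: "g * rho * (\<psi> 0)\<^sup>2 / integral {-1..1} (\<lambda>x. (d x)\<^sup>2) \<le> Bc_sq g rho" if h: "H01_deriv \<psi> d" "nonzero_on \<psi>" for \<psi> d
    unfolding Bc_sq_def H01_basic(7)[OF h(1), symmetric] by (rule cSup_upper[OF _ bdd]) (use h in blast)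
  show nn: "0 \<le> Bc_sq g rho"
    using up[OF witness_H01] assms by (smt (verit) divide_nonneg_nonneg H01_Dnn[OF witness_H01(1)] mult_nonneg_nonneg zero_le_power2)
  thus "(Bc g rho)\<^sup>2 = Bc_sq g rho" by (simp add: Bc_def)
  fix \<psi> d assume h: "H01_deriv \<psi> d"
  show "g * rho * (\<psi> 0)\<^sup>2 \<le> Bc_sq g rho * integral {-1..1} (\<lambda>x. (d x)\<^sup>2)"
  proof (cases "nonzero_on \<psi>")
    case True
    have D: "0 < integral {-1..1} (\<lambda>x. (d x)\<^sup>2)" by (rule H01_Dpos[OF h True])
    thus ?thesis using up[OF h True] by (simp add: divide_le_eq mult.commute)
  next
    case False
    hence "\<psi> 0 = 0" by (auto simp: nonzero_on_def)
    thus ?thesis using nn H01_Dnn[OF h] by simp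
  qed
qed

lemma xi_bdd:
  assumes "g > 0" "rho > 0" "nB > 0"
  shows "bdd_above {(g * rho * (\<psi> 0)\<^sup>2 - nB\<^sup>2 * (LBINT x=-1..1. (d\<psi> x)\<^sup>2))
                          / (nB\<^sup>2 * (LBINT x=-1..1. (\<psi> x)\<^sup>2)) | \<psi> d\<psi>.
                      H01_deriv \<psi> d\<psi> \<and> nonzero_on \<psi>}"
proof -
  define \<delta> where "\<delta> = min 1 (nB\<^sup>2 / (2 * g * rho))"
  have dp: "0 < \<delta>" "\<delta> \<le> 1" using assms by (auto simp: \<delta>_def)
  have d2: "2 * \<delta> * g * rho \<le> nB\<^sup>2"
  proof -
    have "\<delta> \<le> nB\<^sup>2 / (2 * g * rho)" by (simp add: \<delta>_def)
    thus ?thesis using assms by (simp add: le_divide_eq mult.commute mult.left_commute)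
  qed
  define K where "K = 2 * g * rho / (\<delta> * nB\<^sup>2)"
  have Kp: "0 \<le> K" using assms dp by (simp add: K_def)
  show ?thesis
  proof (rule bdd_aboveI[of _ K], safe)
    fix \<psi> d assume h: "H01_deriv \<psi> d" "nonzero_on \<psi>"
    define I where "I = integral {-1..1} (\<lambda>x. (\<psi> x)\<^sup>2)"
    define D where "D = integral {-1..1} (\<lambda>x. (d x)\<^sup>2)"
    have I0: "0 \<le> I" "0 \<le> D" using H01_Inn[OF h(1)] H01_Dnn[OF h(1)] by (simp_all add: I_def D_def)
    have av: "\<delta> * (\<psi> 0)\<^sup>2 \<le> 2 * I + 2 * \<delta>\<^sup>2 * D" using H01_avg[OF h(1) dp] by (simp add: I_def D_def)
    have "g * rho * (\<delta> * (\<psi> 0)\<^sup>2) \<le> g * rho * (2 * I + 2 * \<delta>\<^sup>2 * D)"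
      using av assms by simp
    hence "\<delta> * (g * rho * (\<psi> 0)\<^sup>2) \<le> 2 * g * rho * I + \<delta> * (2 * \<delta> * g * rho) * D"
      by (simp add: algebra_simps power2_eq_square)
    also have "\<dots> \<le> 2 * g * rho * I + \<delta> * nB\<^sup>2 * D"
      using d2 dp I0 by (intro add_left_mono mult_right_mono mult_left_mono) auto
    finally have "\<delta> * (g * rho * (\<psi> 0)\<^sup>2 - nB\<^sup>2 * D) \<le> 2 * g * rho * I" by (simp add: algebra_simps)
    hence num: "g * rho * (\<psi> 0)\<^sup>2 - nB\<^sup>2 * D \<le> K * (nB\<^sup>2 * I)"
      using dp assms by (simp add: K_def field_simps)
    show "(g * rho * (\<psi> 0)\<^sup>2 - nB\<^sup>2 * (LBINT x=-1..1. (d x)\<^sup>2)) / (nB\<^sup>2 * (LBINT x=-1..1. (\<psi> x)\<^sup>2)) \<le> K"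
    proof (cases "I = 0")
      case True thus ?thesis using Kp by (simp add: H01_Ilbint[OF h(1)] I_def)
    next
      case False
      hence "0 < nB\<^sup>2 * I" using I0 assms by simp
      thus ?thesis using num by (simp add: H01_Ilbint[OF h(1)] H01_basic(7)[OF h(1)] I_def D_def divide_le_eq)
    qed
  qed
qed



lemma DERIV_eq: "(f has_real_derivative a) F \<Longrightarrow> a = b \<Longrightarrow> (f has_real_derivative b) F" by simp

lemma Bern_deriv:
  "(Bernstein (Suc m) k has_real_derivative
     real (Suc m) * ((if k = 0 then 0 else Bernstein m (k - 1) t) - Bernstein m k t)) (at t)"
proof (cases k)
  case 0
  have "((\<lambda>t. (1 - t) ^ Suc m) has_real_derivative real (Suc m) * (1 - t) ^ (Suc m - Suc 0) * (-1)) (at t)"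
    by (rule DERIV_chain2[OF DERIV_pow]) (auto intro!: derivative_eq_intros)
  thus ?thesis using 0 by (simp add: Bernstein_def[abs_def] algebra_simps)
next
  case (Suc j)
  define C where "C = real (Suc m choose Suc j)"
  have d: "((\<lambda>t. C * (t ^ Suc j * (1 - t) ^ (m - j))) has_real_derivative
      C * (real (Suc j) * t ^ j * (1 - t) ^ (m - j) - t ^ Suc j * (real (m - j) * (1 - t) ^ (m - j - 1)))) (at t)"
    by (rule DERIV_eq[OF DERIV_cmult[OF DERIV_mult[OF DERIV_pow DERIV_chain2[OF DERIV_pow, of "\<lambda>t. 1 - t"]]]])
      (auto intro!: derivative_eq_intros simp: algebra_simps)
  have e1: "C * real (Suc j) = real (Suc m) * real (m choose j)"
    unfolding C_def using Suc_times_binomial_eq[of m j] by (metis of_nat_mult)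
  have e2: "C * real (m - j) = real (Suc m) * real (m choose Suc j)"
    unfolding C_def using binomial_absorb_comp[of "Suc m" "Suc j"] by (metis diff_Suc_1 diff_Suc_Suc of_nat_mult mult.commute)
  have "C * (real (Suc j) * t ^ j * (1 - t) ^ (m - j) - t ^ Suc j * (real (m - j) * (1 - t) ^ (m - j - 1)))
      = (C * real (Suc j)) * t ^ j * (1 - t) ^ (m - j) - (C * real (m - j)) * t ^ Suc j * (1 - t) ^ (m - Suc j)"
    by (simp add: algebra_simps)
  also have "\<dots> = real (Suc m) * (Bernstein m j t - Bernstein m (Suc j) t)"
    unfolding e1 e2 Bernstein_def by (simp add: algebra_simps)
  finally have "((\<lambda>t. C * (t ^ Suc j * (1 - t) ^ (m - j))) has_real_derivative
      real (Suc m) * (Bernstein m j t - Bernstein m (Suc j) t)) (at t)" using d by simp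
  moreover have "Bernstein (Suc m) k = (\<lambda>t. C * (t ^ Suc j * (1 - t) ^ (m - j)))"
    by (auto simp: Suc Bernstein_def C_def)
  ultimately show ?thesis using Suc by simp
qed

lemma Bern_top0: "Bernstein m (Suc m) t = 0"
  by (simp add: Bernstein_def)

lemma BernP_deriv:
  "((\<lambda>t. \<Sum>k\<le>Suc m. f k * Bernstein (Suc m) k t) has_real_derivative
     real (Suc m) * (\<Sum>k\<le>m. (f (Suc k) - f k) * Bernstein m k t)) (at t)"
proof -
  have d: "((\<lambda>t. \<Sum>k\<le>Suc m. f k * Bernstein (Suc m) k t) has_real_derivative
     (\<Sum>k\<le>Suc m. f k * (real (Suc m) * ((if k = 0 then 0 else Bernstein m (k - 1) t) - Bernstein m k t)))) (at t)"
    by (intro DERIV_sum DERIV_cmult Bern_deriv)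
  have "(\<Sum>k\<le>Suc m. f k * (real (Suc m) * ((if k = 0 then 0 else Bernstein m (k - 1) t) - Bernstein m k t)))
     = real (Suc m) * ((\<Sum>k\<le>Suc m. f k * (if k = 0 then 0 else Bernstein m (k - 1) t)) - (\<Sum>k\<le>Suc m. f k * Bernstein m k t))"
    by (simp add: sum_distrib_left sum_subtractf algebra_simps)
  also have "(\<Sum>k\<le>Suc m. f k * (if k = 0 then 0 else Bernstein m (k - 1) t)) = (\<Sum>k\<le>m. f (Suc k) * Bernstein m k t)"
    by (subst sum.atMost_Suc_shift) simp
  also have "(\<Sum>k\<le>Suc m. f k * Bernstein m k t) = (\<Sum>k\<le>m. f k * Bernstein m k t)"
    by (simp add: Bern_top0)
  also have "(\<Sum>k\<le>m. f (Suc k) * Bernstein m k t) - (\<Sum>k\<le>m. f k * Bernstein m k t) = (\<Sum>k\<le>m. (f (Suc k) - f k) * Bernstein m k t)"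
    by (simp add: sum_subtractf algebra_simps)
  finally show ?thesis using d by simp
qed

lemma Bern_partial_deriv:
  "((\<lambda>t. \<Sum>j\<le>k. Bernstein (Suc m) j t) has_real_derivative - real (Suc m) * Bernstein m k t) (at t)"
proof (induction k)
  case 0
  have "(\<lambda>t. \<Sum>j\<le>0. Bernstein (Suc m) j t) = Bernstein (Suc m) 0" by auto
  thus ?case by (simp only:) (rule DERIV_eq[OF Bern_deriv[of m 0 t]], simp add: algebra_simps)
next
  case (Suc k)
  have "((\<lambda>t. (\<Sum>j\<le>k. Bernstein (Suc m) j t) + Bernstein (Suc m) (Suc k) t) has_real_derivative
     - real (Suc m) * Bernstein m k t + real (Suc m) * (Bernstein m k t - Bernstein m (Suc k) t)) (at t)"
    using DERIV_add[OF Suc.IH Bern_deriv[of m "Suc k" t]] by simp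
  thus ?case by (simp add: algebra_simps)
qed

lemma Bern_at0: "Bernstein n j 0 = (if j = 0 then 1 else 0)"
  by (simp add: Bernstein_def)

lemma Bern_at1: "j \<le> n \<Longrightarrow> Bernstein n j 1 = (if j = n then 1 else 0)"
  by (simp add: Bernstein_def)

lemma cont_Bern: "continuous_on S (\<lambda>x::real. Bernstein n k ((x + 1) / 2))"
  unfolding Bernstein_def by (intro continuous_intros) auto

lemma Bern_integral:
  assumes "k \<le> m"
  shows "((\<lambda>x. Bernstein m k ((x + 1) / 2)) has_integral 2 / real (Suc m)) {-1..1}"
proof -
  define F where "F x = - (2 / real (Suc m)) * (\<Sum>j\<le>k. Bernstein (Suc m) j ((x + 1) / 2))" for x :: real
  have "((\<lambda>x. Bernstein m k ((x + 1) / 2)) has_integral F 1 - F (-1)) {-1..1}"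
  proof (rule fundamental_theorem_of_calculus)
    fix x :: real assume "x \<in> {-1..1}"
    have "(F has_real_derivative (- (2 / real (Suc m)) * ((- real (Suc m) * Bernstein m k ((x + 1) / 2)) * (1/2)))) (at x)"
      unfolding F_def
      by (intro DERIV_cmult DERIV_chain2[OF Bern_partial_deriv]) (auto intro!: derivative_eq_intros)
    hence "(F has_real_derivative Bernstein m k ((x + 1) / 2)) (at x)" by (rule DERIV_eq) (simp add: field_simps)
    thus "(F has_vector_derivative Bernstein m k ((x + 1) / 2)) (at x within {-1..1})"
      by (simp add: has_real_derivative_iff_has_vector_derivative[symmetric] has_field_derivative_at_within)
  qed simp
  moreover have "F 1 - F (-1) = 2 / real (Suc m)"
    using assms by (simp add: F_def Bern_at0 Bern_at1)
  ultimately show ?thesis by simp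
qed

lemma wjensen:
  fixes c w :: "nat \<Rightarrow> real"
  assumes "finite A" "\<And>k. k \<in> A \<Longrightarrow> 0 \<le> w k" "(\<Sum>k\<in>A. w k) = 1"
  shows "(\<Sum>k\<in>A. c k * w k)\<^sup>2 \<le> (\<Sum>k\<in>A. (c k)\<^sup>2 * w k)"
proof -
  define a where "a = (\<Sum>k\<in>A. c k * w k)"
  have "0 \<le> (\<Sum>k\<in>A. w k * (c k - a)\<^sup>2)" using assms(2) by (intro sum_nonneg) auto
  also have "\<dots> = (\<Sum>k\<in>A. (c k)\<^sup>2 * w k) - 2 * a * (\<Sum>k\<in>A. c k * w k) + a\<^sup>2 * (\<Sum>k\<in>A. w k)"
    by (simp add: power2_eq_square algebra_simps sum.distrib sum_subtractf sum_distrib_left)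
  also have "\<dots> = (\<Sum>k\<in>A. (c k)\<^sup>2 * w k) - a\<^sup>2" using assms(3) by (simp add: a_def power2_eq_square)
  finally show ?thesis by (simp add: a_def)
qed

lemma H01_C1:
  assumes "\<And>x. (F has_real_derivative f x) (at x)" "continuous_on UNIV f" "F (-1) = 0" "F 1 = 0"
  shows "H01_deriv F f"
  unfolding H01_deriv_def
proof (intro conjI)
  show "set_borel_measurable lborel {-1..1} f"
    unfolding set_borel_measurable_def
    using borel_measurable_continuous_on_indicator[of "{-1..1}" f] continuous_on_subset[OF assms(2)] by simp
  show "set_integrable lborel {-1..1} (\<lambda>x. (f x)\<^sup>2)"
    by (rule borel_integrable_atLeastAtMost') (intro continuous_intros continuous_on_subset[OF assms(2)], simp)
  show "\<forall>x\<in>{-1..1}. F x = (LBINT t=-1..x. f t)"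
  proof
    fix x :: real assume x: "x \<in> {-1..1}"
    have "(LBINT t=(ereal (-1))..(ereal x). f t) = F x - F (-1)"
      by (rule interval_integral_FTC_finite)
         (auto intro: continuous_on_subset[OF assms(2)] simp: has_real_derivative_iff_has_vector_derivative[symmetric] has_field_derivative_at_within assms(1))
    thus "F x = (LBINT t=-1..x. f t)" using assms(3) by (simp add: ereal_m1(1))
  qed
qed (rule assms(4))

definition ff :: "(real \<Rightarrow> real) \<Rightarrow> nat \<Rightarrow> nat \<Rightarrow> real" where
  "ff \<psi> m k = (if k = 1 \<or> k = m then 0 else \<psi> (2 * real k / real (Suc m) - 1))"

definition Phi :: "(real \<Rightarrow> real) \<Rightarrow> nat \<Rightarrow> real \<Rightarrow> real" where
  "Phi \<psi> m x = (\<Sum>k\<le>Suc m. ff \<psi> m k * Bernstein (Suc m) k ((x + 1) / 2))"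

definition dPhi :: "(real \<Rightarrow> real) \<Rightarrow> nat \<Rightarrow> real \<Rightarrow> real" where
  "dPhi \<psi> m x = real (Suc m) / 2 * (\<Sum>k\<le>m. (ff \<psi> m (Suc k) - ff \<psi> m k) * Bernstein m k ((x + 1) / 2))"

definition ddPhi :: "(real \<Rightarrow> real) \<Rightarrow> nat \<Rightarrow> real \<Rightarrow> real" where
  "ddPhi \<psi> m' x = real (Suc (Suc m')) / 2 * ((\<Sum>k\<le>Suc m'. (ff \<psi> (Suc m') (Suc k) - ff \<psi> (Suc m') k) *
     (real (Suc m') * ((if k = 0 then 0 else Bernstein m' (k - 1) ((x + 1) / 2)) - Bernstein m' k ((x + 1) / 2)))) * (1/2))"

lemma sumB0: "(\<Sum>k\<le>n. f k * Bernstein n k 0) = f 0"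
proof -
  have "(\<Sum>k\<le>n. f k * Bernstein n k 0) = (\<Sum>k\<le>n. if k = 0 then f k else 0)"
    by (rule sum.cong) (auto simp: Bern_at0)
  thus ?thesis by simp
qed

lemma sumB1: "(\<Sum>k\<le>n. f k * Bernstein n k 1) = f n"
proof -
  have "(\<Sum>k\<le>n. f k * Bernstein n k 1) = (\<Sum>k\<le>n. if k = n then f k else 0)"
    by (rule sum.cong) (auto simp: Bern_at1)
  thus ?thesis by simp
qed

lemma ff_top: "m \<noteq> 0 \<Longrightarrow> ff \<psi> m (Suc m) = \<psi> 1"
proof -
  assume m: "m \<noteq> 0"
  have "\<not> (Suc m = 1 \<or> Suc m = m)" using m by simp
  hence "ff \<psi> m (Suc m) = \<psi> (2 * real (Suc m) / real (Suc m) - 1)" unfolding ff_def by (simp only: if_False)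
  also have "2 * real (Suc m) / real (Suc m) - 1 = 1" by (simp del: of_nat_Suc)
  finally show ?thesis .
qed

lemma ff_0: "ff \<psi> m 0 = (if m = 0 then 0 else \<psi> (-1))"
  by (simp add: ff_def)

lemma Phi_deriv: "(Phi \<psi> m has_real_derivative dPhi \<psi> m x) (at x)"
proof -
  have "((\<lambda>x. \<Sum>k\<le>Suc m. ff \<psi> m k * Bernstein (Suc m) k ((x + 1) / 2)) has_real_derivative
     real (Suc m) * (\<Sum>k\<le>m. (ff \<psi> m (Suc k) - ff \<psi> m k) * Bernstein m k ((x + 1) / 2)) * (1/2)) (at x)"
    by (rule DERIV_chain2[OF BernP_deriv]) (auto intro!: derivative_eq_intros)
  thus ?thesis unfolding Phi_def[abs_def] dPhi_def by (rule DERIV_eq) simp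
qed

lemma dPhi_deriv: "(dPhi \<psi> (Suc m') has_real_derivative ddPhi \<psi> m' x) (at x)"
proof -
  have "((\<lambda>t. \<Sum>k\<le>Suc m'. (ff \<psi> (Suc m') (Suc k) - ff \<psi> (Suc m') k) * Bernstein (Suc m') k t) has_real_derivative
     (\<Sum>k\<le>Suc m'. (ff \<psi> (Suc m') (Suc k) - ff \<psi> (Suc m') k) *
     (real (Suc m') * ((if k = 0 then 0 else Bernstein m' (k - 1) ((x + 1) / 2)) - Bernstein m' k ((x + 1) / 2))))) (at ((x + 1) / 2))"
    by (intro DERIV_sum DERIV_cmult Bern_deriv)
  hence "((\<lambda>x. \<Sum>k\<le>Suc m'. (ff \<psi> (Suc m') (Suc k) - ff \<psi> (Suc m') k) * Bernstein (Suc m') k ((x + 1) / 2)) has_real_derivative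
     (\<Sum>k\<le>Suc m'. (ff \<psi> (Suc m') (Suc k) - ff \<psi> (Suc m') k) *
     (real (Suc m') * ((if k = 0 then 0 else Bernstein m' (k - 1) ((x + 1) / 2)) - Bernstein m' k ((x + 1) / 2)))) * (1/2)) (at x)"
    by (rule DERIV_chain2) (auto intro!: derivative_eq_intros)
  from DERIV_cmult[OF this, of "real (Suc (Suc m')) / 2"]
  show ?thesis unfolding dPhi_def[abs_def] ddPhi_def by simp
qed

lemma cont_Bern_UNIV: "continuous_on UNIV (\<lambda>x::real. Bernstein n k ((x + 1) / 2))"
  by (rule cont_Bern)

lemma Phi_H02:
  assumes "\<psi> (-1) = 0" "\<psi> 1 = 0"
  shows "H02_derivs (Phi \<psi> (Suc m')) (dPhi \<psi> (Suc m')) (ddPhi \<psi> m')"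
  unfolding H02_derivs_def
proof
  show "H01_deriv (Phi \<psi> (Suc m')) (dPhi \<psi> (Suc m'))"
  proof (rule H01_C1[OF Phi_deriv])
    show "continuous_on UNIV (dPhi \<psi> (Suc m'))" unfolding dPhi_def[abs_def]
      by (intro continuous_intros cont_Bern_UNIV)
    show "Phi \<psi> (Suc m') (-1) = 0" unfolding Phi_def using assms by (simp add: sumB0 ff_def)
    show "Phi \<psi> (Suc m') 1 = 0" unfolding Phi_def using assms by (simp add: sumB1 ff_top)
  qed
  show "H01_deriv (dPhi \<psi> (Suc m')) (ddPhi \<psi> m')"
  proof (rule H01_C1[OF dPhi_deriv])
    show "continuous_on UNIV (ddPhi \<psi> m')" unfolding ddPhi_def[abs_def]
      apply (intro continuous_intros cont_Bern_UNIV)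
      subgoal for k by (cases "k = 0") (simp_all add: cont_Bern_UNIV)
      done
    show "dPhi \<psi> (Suc m') (-1) = 0" unfolding dPhi_def using assms by (simp add: sumB0 ff_0) (simp add: ff_def)
    show "dPhi \<psi> (Suc m') 1 = 0" unfolding dPhi_def using assms
      by (simp add: sumB1 ff_top) (simp add: ff_def)
  qed
qed

lemma Bern_sum1: "(\<Sum>k\<le>n. Bernstein n k t) = 1" by simp

lemma dPhi_sq_bound:
  assumes "x \<in> {-1..1}"
  shows "(dPhi \<psi> m x)\<^sup>2 \<le> (real (Suc m) / 2)\<^sup>2 * (\<Sum>k\<le>m. (ff \<psi> m (Suc k) - ff \<psi> m k)\<^sup>2 * Bernstein m k ((x + 1) / 2))"
proof -
  have y: "0 \<le> (x + 1) / 2" "(x + 1) / 2 \<le> 1" using assms by auto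
  have "(\<Sum>k\<le>m. (ff \<psi> m (Suc k) - ff \<psi> m k) * Bernstein m k ((x + 1) / 2))\<^sup>2
      \<le> (\<Sum>k\<le>m. (ff \<psi> m (Suc k) - ff \<psi> m k)\<^sup>2 * Bernstein m k ((x + 1) / 2))"
    by (rule wjensen) (use y Bernstein_nonneg in auto)
  thus ?thesis unfolding dPhi_def power_mult_distrib by (intro mult_left_mono) auto
qed

lemma dPhi_int_bound:
  "integral {-1..1} (\<lambda>x. (dPhi \<psi> m x)\<^sup>2) \<le> real (Suc m) / 2 * (\<Sum>k\<le>m. (ff \<psi> m (Suc k) - ff \<psi> m k)\<^sup>2)"
proof -
  define c where "c = (real (Suc m) / 2)\<^sup>2"
  have hi: "((\<lambda>x. c * (\<Sum>k\<le>m. (ff \<psi> m (Suc k) - ff \<psi> m k)\<^sup>2 * Bernstein m k ((x + 1) / 2))) has_integral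
      c * (\<Sum>k\<le>m. (ff \<psi> m (Suc k) - ff \<psi> m k)\<^sup>2 * (2 / real (Suc m)))) {-1..1}"
    apply (intro has_integral_mult_right has_integral_sum finite_atMost)
    apply (rule Bern_integral)
    apply simp
    done
  have "integral {-1..1} (\<lambda>x. (dPhi \<psi> m x)\<^sup>2) \<le> integral {-1..1} (\<lambda>x. c * (\<Sum>k\<le>m. (ff \<psi> m (Suc k) - ff \<psi> m k)\<^sup>2 * Bernstein m k ((x + 1) / 2)))"
  proof (rule integral_le)
    show "(\<lambda>x. (dPhi \<psi> m x)\<^sup>2) integrable_on {-1..1}"
      unfolding dPhi_def by (intro integrable_continuous_interval continuous_intros cont_Bern)
  qed (use hi dPhi_sq_bound c_def in auto)
  also have "\<dots> = c * (\<Sum>k\<le>m. (ff \<psi> m (Suc k) - ff \<psi> m k)\<^sup>2 * (2 / real (Suc m)))" using hi by (rule integral_unique)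
  also have "\<dots> = real (Suc m) / 2 * (\<Sum>k\<le>m. (ff \<psi> m (Suc k) - ff \<psi> m k)\<^sup>2)"
  proof -
    have e: "\<And>S. c * (S * (2 / real (Suc m))) = real (Suc m) / 2 * S"
      unfolding c_def by (simp add: power2_eq_square field_simps del: of_nat_Suc)
    show ?thesis by (simp only: sum_distrib_right[symmetric] e)
  qed
  finally show ?thesis .
qed

definition xk :: "nat \<Rightarrow> nat \<Rightarrow> real" where "xk m k = 2 * real k / real (Suc m) - 1"

lemma xk_props: "k \<le> Suc m \<Longrightarrow> -1 \<le> xk m k \<and> xk m k \<le> 1"
  by (auto simp: xk_def field_simps)

lemma xk_step: "xk m (Suc k) - xk m k = 2 / real (Suc m)"
  by (simp add: xk_def field_simps del: of_nat_Suc) (simp add: algebra_simps)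

lemma xk_0: "xk m 0 = -1"
  by (simp add: xk_def)

lemma xk_top: "xk m (Suc m) = 1"
proof -
  have "2 * real (Suc m) / real (Suc m) = 2" by (rule nonzero_mult_div_cancel_right) simp
  thus ?thesis unfolding xk_def by (simp only:)
qed

lemma partition_sum:
  fixes h :: "real \<Rightarrow> real"
  assumes "h integrable_on {-1..1}"
  shows "j \<le> Suc m \<Longrightarrow> (\<Sum>k<j. integral {xk m k..xk m (Suc k)} h) = integral {-1..xk m j} h"
proof (induction j)
  case 0 thus ?case by (simp add: xk_0)
next
  case (Suc j)
  have p: "0 < 2 / real (Suc m)" by (simp del: of_nat_Suc)
  have a: "-1 \<le> xk m j" "xk m j \<le> xk m (Suc j)" "xk m (Suc j) \<le> 1"
    using xk_props[of j m] xk_props[of "Suc j" m] Suc.prems xk_step[of m j] p by linarith+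
  have "integral {-1..xk m j} h + integral {xk m j..xk m (Suc j)} h = integral {-1..xk m (Suc j)} h"
    by (rule Henstock_Kurzweil_Integration.integral_combine) (use a assms integrable_subinterval_real in fastforce)+
  thus ?case using Suc by simp
qed

lemma scale_lem: "0 < (n::real) \<Longrightarrow> D \<le> (c / n) * W \<Longrightarrow> n / 2 * D \<le> c / 2 * W"
proof -
  assume n: "0 < n" and h: "D \<le> (c / n) * W"
  have "n / 2 * D \<le> n / 2 * ((c / n) * W)" using h n by (intro mult_left_mono) auto
  also have "\<dots> = c / 2 * W" using n by (simp add: field_simps)
  finally show ?thesis .
qed

lemma ff_xk: "k \<noteq> 1 \<Longrightarrow> k \<noteq> m \<Longrightarrow> ff \<psi> m k = \<psi> (xk m k)"
  by (simp add: ff_def xk_def)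

lemma term_bound:
  assumes h: "H01_deriv \<psi> d" and m: "4 \<le> m" and k: "k \<le> m"
  shows "real (Suc m) / 2 * (ff \<psi> m (Suc k) - ff \<psi> m k)\<^sup>2 \<le>
    integral {xk m k..xk m (Suc k)} (\<lambda>x. (d x)\<^sup>2)
    + (if k = 1 then 2 * integral {-1..xk m 2} (\<lambda>x. (d x)\<^sup>2) else 0)
    + (if k = m - 1 then 2 * integral {xk m (m - 1)..1} (\<lambda>x. (d x)\<^sup>2) else 0)"
proof -
  note B = H01_basic[OF h]
  define n where "n = real (Suc m)"
  have n: "0 < n" by (simp add: n_def)
  have p: "0 < 2 / real (Suc m)" by (simp del: of_nat_Suc)
  have xb: "\<And>j. j \<le> Suc m \<Longrightarrow> -1 \<le> xk m j \<and> xk m j \<le> 1" by (rule xk_props)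
  have mono: "xk m k \<le> xk m (Suc k)" using xk_step[of m k] p by linarith
  have W: "0 \<le> integral {xk m k..xk m (Suc k)} (\<lambda>x. (d x)\<^sup>2)"
    by (rule integral_nonneg[OF H01_sub(1)[OF h]]) (use xb[of k] xb[of "Suc k"] k mono in auto)
  have A: "0 \<le> integral {-1..xk m 2} (\<lambda>x. (d x)\<^sup>2)"
    by (rule integral_nonneg[OF H01_sub(1)[OF h]]) (use xb[of 2] m in auto)
  have Bt: "0 \<le> integral {xk m (m - 1)..1} (\<lambda>x. (d x)\<^sup>2)"
    by (rule integral_nonneg[OF H01_sub(1)[OF h]]) (use xb[of "m - 1"] m in auto)
  have nz: "(if k = 1 then 2 * integral {-1..xk m 2} (\<lambda>x. (d x)\<^sup>2) else 0) \<ge> 0"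
     "(if k = m - 1 then 2 * integral {xk m (m - 1)..1} (\<lambda>x. (d x)\<^sup>2) else 0) \<ge> 0"
    using A Bt by auto
  consider "k = 0" | "k = 1" | "k = m - 1" | "k = m" | "2 \<le> k \<and> k \<le> m - 2" using k m by linarith
  thus ?thesis
  proof cases
    case 1
    have "ff \<psi> m (Suc k) - ff \<psi> m k = 0" using 1 m B(6) by (simp add: ff_def)
    thus ?thesis using W nz by simp
  next
    case 2
    have e: "ff \<psi> m (Suc k) - ff \<psi> m k = \<psi> (xk m 2) - \<psi> (-1)"
      using 2 m B(6) by (simp add: ff_xk numeral_2_eq_2) (simp add: ff_def)
    have "(\<psi> (xk m 2) - \<psi> (-1))\<^sup>2 \<le> (xk m 2 - -1) * integral {-1..xk m 2} (\<lambda>x. (d x)\<^sup>2)"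
      by (rule H01_sub(4)[OF h]) (use xb[of 2] m in auto)
    also have "xk m 2 - -1 = 4 / n" by (simp add: xk_def n_def)
    finally have "n / 2 * (\<psi> (xk m 2) - \<psi> (-1))\<^sup>2 \<le> 4 / 2 * integral {-1..xk m 2} (\<lambda>x. (d x)\<^sup>2)"
      by (rule scale_lem[OF n])
    moreover have "k \<noteq> m - 1" using 2 m by simp
    ultimately show ?thesis using e 2 m W by (simp add: n_def)
  next
    case 3
    have e: "ff \<psi> m (Suc k) - ff \<psi> m k = \<psi> 1 - \<psi> (xk m (m - 1))"
      using 3 m B(5) by (simp add: ff_xk) (simp add: ff_def)
    have "(\<psi> 1 - \<psi> (xk m (m - 1)))\<^sup>2 \<le> (1 - xk m (m - 1)) * integral {xk m (m - 1)..1} (\<lambda>x. (d x)\<^sup>2)"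
      by (rule H01_sub(4)[OF h]) (use xb[of "m - 1"] m in auto)
    also have "1 - xk m (m - 1) = 4 / n"
    proof -
      have "real (m - 1) = real m - 1" using m by simp
      thus ?thesis by (simp add: xk_def n_def field_simps)
    qed
    finally have "n / 2 * (\<psi> 1 - \<psi> (xk m (m - 1)))\<^sup>2 \<le> 4 / 2 * integral {xk m (m - 1)..1} (\<lambda>x. (d x)\<^sup>2)"
      by (rule scale_lem[OF n])
    moreover have "k \<noteq> 1" using 3 m by simp
    ultimately show ?thesis using e 3 m W by (simp add: n_def)
  next
    case 4
    have "ff \<psi> m (Suc k) - ff \<psi> m k = 0" using 4 m B(5) by (simp add: ff_top) (simp add: ff_def)
    thus ?thesis using W nz by simp
  next
    case 5
    have e: "ff \<psi> m (Suc k) - ff \<psi> m k = \<psi> (xk m (Suc k)) - \<psi> (xk m k)"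
    proof -
      have "k \<noteq> m" "Suc k \<noteq> m" "k \<noteq> 1" "0 < k" using 5 m by arith+
      thus ?thesis using ff_xk[of k m \<psi>] ff_xk[of "Suc k" m \<psi>] by simp
    qed
    have "(\<psi> (xk m (Suc k)) - \<psi> (xk m k))\<^sup>2 \<le> (xk m (Suc k) - xk m k) * integral {xk m k..xk m (Suc k)} (\<lambda>x. (d x)\<^sup>2)"
      by (rule H01_sub(4)[OF h]) (use xb[of k] xb[of "Suc k"] k mono in auto)
    also have "xk m (Suc k) - xk m k = 2 / n" by (simp add: xk_step n_def)
    finally have "n / 2 * (\<psi> (xk m (Suc k)) - \<psi> (xk m k))\<^sup>2 \<le> 2 / 2 * integral {xk m k..xk m (Suc k)} (\<lambda>x. (d x)\<^sup>2)"
      by (rule scale_lem[OF n])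
    thus ?thesis using e nz by (simp add: n_def)
  qed
qed

lemma energy_bound:
  assumes h: "H01_deriv \<psi> d" and m: "4 \<le> m"
  shows "integral {-1..1} (\<lambda>x. (dPhi \<psi> m x)\<^sup>2) \<le> integral {-1..1} (\<lambda>x. (d x)\<^sup>2)
     + 2 * integral {-1..xk m 2} (\<lambda>x. (d x)\<^sup>2) + 2 * integral {xk m (m - 1)..1} (\<lambda>x. (d x)\<^sup>2)"
proof -
  define A where "A = 2 * integral {-1..xk m 2} (\<lambda>x. (d x)\<^sup>2)"
  define Bt where "Bt = 2 * integral {xk m (m - 1)..1} (\<lambda>x. (d x)\<^sup>2)"
  have "integral {-1..1} (\<lambda>x. (dPhi \<psi> m x)\<^sup>2) \<le> real (Suc m) / 2 * (\<Sum>k\<le>m. (ff \<psi> m (Suc k) - ff \<psi> m k)\<^sup>2)"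
    by (rule dPhi_int_bound)
  also have "\<dots> = (\<Sum>k\<le>m. real (Suc m) / 2 * (ff \<psi> m (Suc k) - ff \<psi> m k)\<^sup>2)" by (simp add: sum_distrib_left)
  also have "\<dots> \<le> (\<Sum>k\<le>m. integral {xk m k..xk m (Suc k)} (\<lambda>x. (d x)\<^sup>2) + (if k = 1 then A else 0) + (if k = m - 1 then Bt else 0))"
    by (rule sum_mono) (unfold A_def Bt_def, rule term_bound[OF h m], simp)
  also have "\<dots> = (\<Sum>k<Suc m. integral {xk m k..xk m (Suc k)} (\<lambda>x. (d x)\<^sup>2)) + A + Bt"
    using m by (simp add: sum.distrib lessThan_Suc_atMost)
  also have "(\<Sum>k<Suc m. integral {xk m k..xk m (Suc k)} (\<lambda>x. (d x)\<^sup>2)) = integral {-1..1} (\<lambda>x. (d x)\<^sup>2)"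
    using partition_sum[OF H01_basic(1)[OF h], of "Suc m" m] by (simp add: xk_top)
  finally show ?thesis by (simp add: A_def Bt_def)
qed

lemma cont_at_pt:
  fixes f :: "real \<Rightarrow> real"
  assumes "continuous_on S f" "a \<in> S" "0 < e"
  shows "\<exists>\<delta>>0. \<forall>x\<in>S. \<bar>x - a\<bar> < \<delta> \<longrightarrow> \<bar>f x - f a\<bar> < e"
  using assms unfolding continuous_on_iff dist_real_def by blast

lemma inv_swap: "0 < (u::real) \<Longrightarrow> 0 < n \<Longrightarrow> c / u < n \<Longrightarrow> c / n < u"
  by (simp add: pos_divide_less_eq mult.commute)

lemma Bern_le1: "0 \<le> t \<Longrightarrow> t \<le> 1 \<Longrightarrow> k \<le> n \<Longrightarrow> Bernstein n k t \<le> 1"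
proof -
  assume t: "0 \<le> t" "t \<le> 1" and k: "k \<le> n"
  have "Bernstein n k t \<le> (\<Sum>j\<le>n. Bernstein n j t)"
    by (rule member_le_sum) (use t k Bernstein_nonneg in auto)
  thus ?thesis by simp
qed

lemma Phi_split:
  fixes \<psi> :: "real \<Rightarrow> real"
  assumes m: "2 \<le> m"
  defines "gg \<equiv> \<lambda>t. \<psi> (2 * t - 1)"
  shows "Phi \<psi> m x = (\<Sum>k\<le>Suc m. gg (real k / real (Suc m)) * Bernstein (Suc m) k ((x + 1) / 2))
     - gg (1 / real (Suc m)) * Bernstein (Suc m) 1 ((x + 1) / 2)
     - gg (real m / real (Suc m)) * Bernstein (Suc m) m ((x + 1) / 2)"
proof -
  define y where "y = (x + 1) / 2"
  have "Phi \<psi> m x = (\<Sum>k\<le>Suc m. gg (real k / real (Suc m)) * Bernstein (Suc m) k y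
     - (if k = 1 then gg (1 / real (Suc m)) * Bernstein (Suc m) 1 y else 0)
     - (if k = m then gg (real m / real (Suc m)) * Bernstein (Suc m) m y else 0))"
    unfolding Phi_def y_def[symmetric]
  proof (rule sum.cong)
    fix k assume "k \<in> {..Suc m}"
    show "ff \<psi> m k * Bernstein (Suc m) k y = gg (real k / real (Suc m)) * Bernstein (Suc m) k y
     - (if k = 1 then gg (1 / real (Suc m)) * Bernstein (Suc m) 1 y else 0)
     - (if k = m then gg (real m / real (Suc m)) * Bernstein (Suc m) m y else 0)"
      using m by (cases "k = 1"; cases "k = m") (auto simp: ff_def gg_def)
  qed simp
  also have "\<dots> = (\<Sum>k\<le>Suc m. gg (real k / real (Suc m)) * Bernstein (Suc m) k y)
     - gg (1 / real (Suc m)) * Bernstein (Suc m) 1 y - gg (real m / real (Suc m)) * Bernstein (Suc m) m y"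
    using m by (simp add: sum_subtractf)
  finally show ?thesis by (simp add: y_def)
qed

lemma Phi_unif:
  assumes h: "H01_deriv \<psi> d" and e: "0 < e"
  shows "\<exists>N. \<forall>m\<ge>N. \<forall>x\<in>{-1..1}. \<bar>Phi \<psi> m x - \<psi> x\<bar> < e"
proof -
  note B = H01_basic[OF h]
  define gg where "gg = (\<lambda>t. \<psi> (2 * t - 1))"
  have cg: "continuous_on {0..1} gg" unfolding gg_def
    by (rule continuous_on_compose2[OF B(4)]) (auto intro!: continuous_intros)
  have e3: "0 < e / 3" using e by simp
  obtain N1 where N1: "\<And>n t. N1 \<le> n \<Longrightarrow> t \<in> {0..1} \<Longrightarrow> \<bar>gg t - (\<Sum>k\<le>n. gg (k/n) * Bernstein n k t)\<bar> < e / 3"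
    using Bernstein_Weierstrass[OF cg e3] by blast
  obtain d0 where d0: "d0 > 0" "\<And>t. t \<in> {0..1} \<Longrightarrow> \<bar>t - 0\<bar> < d0 \<Longrightarrow> \<bar>gg t - gg 0\<bar> < e / 3"
    using cont_at_pt[OF cg _ e3, of 0] by auto
  obtain d1 where d1: "d1 > 0" "\<And>t. t \<in> {0..1} \<Longrightarrow> \<bar>t - 1\<bar> < d1 \<Longrightarrow> \<bar>gg t - gg 1\<bar> < e / 3"
    using cont_at_pt[OF cg _ e3, of 1] by auto
  have g0: "gg 0 = 0" "gg 1 = 0" using B(5,6) by (simp_all add: gg_def)
  obtain N2 :: nat where N2: "1 / min d0 d1 < N2" using reals_Archimedean2 by blast
  show ?thesis
  proof (rule exI[of _ "max (max N1 N2) 2"], intro allI impI ballI)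
    fix m x assume m: "max (max N1 N2) 2 \<le> m" and x: "x \<in> {-1..(1::real)}"
    define n where "n = real (Suc m)"
    define y where "y = (x + 1) / 2"
    have y: "y \<in> {0..1}" using x by (auto simp: y_def)
    have n: "1 / n < min d0 d1"
    proof -
      have "0 < min d0 d1" using d0 d1 by simp
      moreover have "1 / min d0 d1 < n" using N2 m by (simp add: n_def)
      moreover have "0 < n" by (simp add: n_def)
      ultimately show ?thesis using inv_swap[of "min d0 d1" n 1] by blast
    qed
    have t1: "\<bar>gg (1 / n)\<bar> < e / 3"
      using d0(2)[of "1 / n"] n g0 by (simp add: n_def)
    have t2: "\<bar>gg (real m / n)\<bar> < e / 3"
    proof -
      have "\<bar>real m / n - 1\<bar> = 1 / n" by (simp add: n_def field_simps)
      moreover have "real m / n \<in> {0..1}" by (simp add: n_def)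
      ultimately show ?thesis using d1(2)[of "real m / n"] n g0 by simp
    qed
    have w: "\<bar>gg y - (\<Sum>k\<le>Suc m. gg (real k / n) * Bernstein (Suc m) k y)\<bar> < e / 3"
      using N1[of "Suc m" y] m y by (simp add: n_def)
    have b1: "Bernstein (Suc m) 1 y \<le> 1" "Bernstein (Suc m) m y \<le> 1"
      "0 \<le> Bernstein (Suc m) 1 y" "0 \<le> Bernstein (Suc m) m y"
      using y by (auto intro!: Bern_le1 Bernstein_nonneg)
    have "\<bar>gg (1 / n) * Bernstein (Suc m) 1 y\<bar> \<le> \<bar>gg (1 / n)\<bar>"
      using b1 by (simp add: abs_mult mult_left_le)
    moreover have "\<bar>gg (real m / n) * Bernstein (Suc m) m y\<bar> \<le> \<bar>gg (real m / n)\<bar>"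
      using b1 by (simp add: abs_mult mult_left_le)
    moreover have "Phi \<psi> m x = (\<Sum>k\<le>Suc m. gg (real k / n) * Bernstein (Suc m) k y)
       - gg (1 / n) * Bernstein (Suc m) 1 y - gg (real m / n) * Bernstein (Suc m) m y"
      using Phi_split[of m \<psi> x] m unfolding gg_def n_def y_def by simp
    moreover have "\<psi> x = gg y" unfolding gg_def y_def by (simp add: field_simps)
    ultimately show "\<bar>Phi \<psi> m x - \<psi> x\<bar> < e" using w t1 t2 by linarith
  qed
qed

lemma bdry_small:
  assumes h: "H01_deriv \<psi> d" and e: "0 < e"
  shows "\<exists>N. \<forall>m\<ge>N. 2 * integral {-1..xk m 2} (\<lambda>x. (d x)\<^sup>2) + 2 * integral {xk m (m - 1)..1} (\<lambda>x. (d x)\<^sup>2) < e"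
proof -
  note B = H01_basic[OF h]
  define F where "F y = integral {-1..y} (\<lambda>x. (d x)\<^sup>2)" for y
  have cF: "continuous_on {-1..1} F" unfolding F_def by (rule indefinite_integral_continuous_1[OF B(1)])
  have e4: "0 < e / 4" using e by simp
  obtain d0 where d0: "d0 > 0" "\<And>t. t \<in> {-1..1} \<Longrightarrow> \<bar>t - -1\<bar> < d0 \<Longrightarrow> \<bar>F t - F (-1)\<bar> < e / 4"
    using cont_at_pt[OF cF _ e4, of "-1"] by auto
  obtain d1 where d1: "d1 > 0" "\<And>t. t \<in> {-1..1} \<Longrightarrow> \<bar>t - 1\<bar> < d1 \<Longrightarrow> \<bar>F t - F 1\<bar> < e / 4"
    using cont_at_pt[OF cF _ e4, of 1] by auto
  have F0: "F (-1) = 0" by (simp add: F_def)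
  obtain N2 :: nat where N2: "4 / min d0 d1 < N2" using reals_Archimedean2 by blast
  show ?thesis
  proof (rule exI[of _ "max N2 4"], intro allI impI)
    fix m assume m: "max N2 4 \<le> m"
    define n where "n = real (Suc m)"
    have np: "0 < n" by (simp add: n_def)
    have n: "4 / n < min d0 d1"
    proof -
      have p: "0 < min d0 d1" using d0 d1 by simp
      have "4 / min d0 d1 < n" using N2 m by (simp add: n_def)
      thus ?thesis using p np inv_swap[of "min d0 d1" n 4] by blast
    qed
    have x2: "xk m 2 = -1 + 4 / n" by (simp add: xk_def n_def)
    have xm: "xk m (m - 1) = 1 - 4 / n"
    proof -
      have "real (m - 1) = real m - 1" using m by simp
      thus ?thesis by (simp add: xk_def n_def field_simps)
    qed
    have r: "4 / n \<le> 2" using m np by (simp add: n_def divide_le_eq)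
    have a: "\<bar>F (xk m 2) - F (-1)\<bar> < e / 4"
      by (rule d0(2)) (use x2 n r np in auto)
    have b: "\<bar>F (xk m (m - 1)) - F 1\<bar> < e / 4"
      by (rule d1(2)) (use xm n r np in auto)
    have "integral {-1..xk m (m - 1)} (\<lambda>x. (d x)\<^sup>2) + integral {xk m (m - 1)..1} (\<lambda>x. (d x)\<^sup>2) = integral {-1..1} (\<lambda>x. (d x)\<^sup>2)"
      by (rule Henstock_Kurzweil_Integration.integral_combine) (use xm r np B(1) in auto)
    hence "integral {xk m (m - 1)..1} (\<lambda>x. (d x)\<^sup>2) = F 1 - F (xk m (m - 1))" by (simp add: F_def)
    thus "2 * integral {-1..xk m 2} (\<lambda>x. (d x)\<^sup>2) + 2 * integral {xk m (m - 1)..1} (\<lambda>x. (d x)\<^sup>2) < e"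
    proof -
      have i1: "integral {-1..xk m 2} (\<lambda>x. (d x)\<^sup>2) = F (xk m 2)" by (simp add: F_def)
      show ?thesis using i1 \<open>integral {xk m (m - 1)..1} (\<lambda>x. (d x)\<^sup>2) = F 1 - F (xk m (m - 1))\<close>
        a b F0 abs_ge_self[of "F (xk m 2) - F (-1)"] abs_ge_minus_self[of "F (xk m (m - 1)) - F 1"] by linarith
    qed
  qed
qed

lemma sq_close:
  fixes a b :: real
  assumes "\<bar>a - b\<bar> \<le> \<eta>" "\<eta> \<le> 1" "\<bar>b\<bar> \<le> M"
  shows "a\<^sup>2 \<le> b\<^sup>2 + \<eta> * (2 * M + 1)" "b\<^sup>2 \<le> a\<^sup>2 + \<eta> * (2 * M + 1)"
proof -
  have e: "\<bar>a\<^sup>2 - b\<^sup>2\<bar> = \<bar>a - b\<bar> * \<bar>a + b\<bar>"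
    by (simp add: abs_mult[symmetric] power2_eq_square algebra_simps)
  have "\<bar>a + b\<bar> \<le> 2 * M + 1" using assms by linarith
  hence "\<bar>a - b\<bar> * \<bar>a + b\<bar> \<le> \<eta> * (2 * M + 1)" using assms(1) by (intro mult_mono) auto
  hence "\<bar>a\<^sup>2 - b\<^sup>2\<bar> \<le> \<eta> * (2 * M + 1)" using e by simp
  thus "a\<^sup>2 \<le> b\<^sup>2 + \<eta> * (2 * M + 1)" "b\<^sup>2 \<le> a\<^sup>2 + \<eta> * (2 * M + 1)" by (simp_all add: abs_le_iff)
qed

lemma approx:
  assumes h: "H01_deriv \<psi> d" and c: "0 \<le> c1" "0 \<le> c2" "0 \<le> c3"
    and Q: "c1 * integral {-1..1} (\<lambda>x. (\<psi> x)\<^sup>2) + c2 * integral {-1..1} (\<lambda>x. (d x)\<^sup>2) - c3 * (\<psi> 0)\<^sup>2 < 0"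
  shows "\<exists>\<phi> d\<phi> dd\<phi>. H02_derivs \<phi> d\<phi> dd\<phi> \<and>
     c1 * integral {-1..1} (\<lambda>x. (\<phi> x)\<^sup>2) + c2 * integral {-1..1} (\<lambda>x. (d\<phi> x)\<^sup>2) - c3 * (\<phi> 0)\<^sup>2 < 0"
proof -
  note B = H01_basic[OF h]
  define I where "I = integral {-1..1} (\<lambda>x. (\<psi> x)\<^sup>2)"
  define D where "D = integral {-1..1} (\<lambda>x. (d x)\<^sup>2)"
  define \<epsilon> where "\<epsilon> = - (c1 * I + c2 * D - c3 * (\<psi> 0)\<^sup>2)"
  have \<epsilon>: "0 < \<epsilon>" using Q by (simp add: \<epsilon>_def I_def D_def)
  define M where "M = sqrt (2 * D)"
  have Mb: "\<bar>\<psi> x\<bar> \<le> M" if "x \<in> {-1..1}" for x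
    unfolding M_def D_def by (rule real_le_rsqrt) (use H01_ptbound(1)[OF h that] in simp)
  have M0: "0 \<le> M" by (simp add: M_def D_def H01_Dnn[OF h])
  define K where "K = (2 * c1 + c3) * (2 * M + 1) + 1"
  have K: "0 < K" using c M0 by (simp add: K_def add_nonneg_pos)
  define \<eta> where "\<eta> = min 1 (\<epsilon> / (3 * K))"
  have \<eta>: "0 < \<eta>" "\<eta> \<le> 1" "K * \<eta> \<le> \<epsilon> / 3" using \<epsilon> K by (auto simp: \<eta>_def field_simps min_def)
  define \<tau> where "\<tau> = \<epsilon> / (3 * (c2 + 1))"
  have \<tau>: "0 < \<tau>" "c2 * \<tau> \<le> \<epsilon> / 3"
  proof -
    show "0 < \<tau>" using \<epsilon> c by (simp add: \<tau>_def)
    have "c2 * \<tau> = \<epsilon> / 3 * (c2 / (c2 + 1))" using c by (simp add: \<tau>_def field_simps)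
    also have "\<dots> \<le> \<epsilon> / 3 * 1" using c \<epsilon> by (intro mult_left_mono) auto
    finally show "c2 * \<tau> \<le> \<epsilon> / 3" by simp
  qed
  obtain N1 where N1: "\<And>m x. N1 \<le> m \<Longrightarrow> x \<in> {-1..1} \<Longrightarrow> \<bar>Phi \<psi> m x - \<psi> x\<bar> < \<eta>"
    using Phi_unif[OF h \<eta>(1)] by blast
  obtain N2 where N2: "\<And>m. N2 \<le> m \<Longrightarrow> 2 * integral {-1..xk m 2} (\<lambda>x. (d x)\<^sup>2) + 2 * integral {xk m (m - 1)..1} (\<lambda>x. (d x)\<^sup>2) < \<tau>"
    using bdry_small[OF h \<tau>(1)] by blast
  define m where "m = max (max N1 N2) 4"
  have m4: "4 \<le> m" "N1 \<le> m" "N2 \<le> m" by (auto simp: m_def)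
  then obtain m' where mm: "m = Suc m'" by (metis Suc_pred' less_le_trans zero_less_numeral)
  define \<phi> where "\<phi> = Phi \<psi> m"
  have H2: "H02_derivs \<phi> (dPhi \<psi> m) (ddPhi \<psi> m')"
    unfolding \<phi>_def mm by (rule Phi_H02[OF B(6) B(5)])
  have close: "\<bar>\<phi> x - \<psi> x\<bar> \<le> \<eta>" if "x \<in> {-1..1}" for x
    using N1[OF m4(2) that] by (simp add: \<phi>_def)
  have E: "integral {-1..1} (\<lambda>x. (dPhi \<psi> m x)\<^sup>2) \<le> D + \<tau>"
    using energy_bound[OF h m4(1)] N2[OF m4(3)] by (simp add: D_def)
  have cphi: "continuous_on {-1..1} (\<lambda>x. (\<phi> x)\<^sup>2)"
    unfolding \<phi>_def Phi_def by (intro continuous_intros cont_Bern)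
  have cpsi: "continuous_on {-1..1} (\<lambda>x. (\<psi> x)\<^sup>2 + \<eta> * (2 * M + 1))"
    by (intro continuous_intros B(4))
  have Iphi: "integral {-1..1} (\<lambda>x. (\<phi> x)\<^sup>2) \<le> I + 2 * (\<eta> * (2 * M + 1))"
  proof -
    have "integral {-1..1} (\<lambda>x. (\<phi> x)\<^sup>2) \<le> integral {-1..1} (\<lambda>x. (\<psi> x)\<^sup>2 + \<eta> * (2 * M + 1))"
      by (rule integral_le[OF integrable_continuous_interval[OF cphi] integrable_continuous_interval[OF cpsi]])
         (rule sq_close(1)[OF close \<eta>(2) Mb], auto)
    also have "\<dots> = I + 2 * (\<eta> * (2 * M + 1))"
    proof -
      have "((\<lambda>x. (\<psi> x)\<^sup>2 + \<eta> * (2 * M + 1)) has_integral (I + 2 * (\<eta> * (2 * M + 1)))) {-1..1}"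
        using has_integral_add[OF integrable_integral[OF integrable_continuous_interval[OF continuous_on_power[OF B(4)]]] has_integral_const_real[of "\<eta> * (2 * M + 1)" "-1" 1]]
        by (simp add: I_def)
      thus ?thesis by (rule integral_unique)
    qed
    finally show ?thesis .
  qed
  have P0: "(\<psi> 0)\<^sup>2 \<le> (\<phi> 0)\<^sup>2 + \<eta> * (2 * M + 1)"
    by (rule sq_close(2)[OF close \<eta>(2) Mb]) auto
  have "c1 * integral {-1..1} (\<lambda>x. (\<phi> x)\<^sup>2) + c2 * integral {-1..1} (\<lambda>x. (dPhi \<psi> m x)\<^sup>2) - c3 * (\<phi> 0)\<^sup>2
      \<le> c1 * (I + 2 * (\<eta> * (2 * M + 1))) + c2 * (D + \<tau>) - c3 * ((\<psi> 0)\<^sup>2 - \<eta> * (2 * M + 1))"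
  proof -
    have "c1 * integral {-1..1} (\<lambda>x. (\<phi> x)\<^sup>2) \<le> c1 * (I + 2 * (\<eta> * (2 * M + 1)))" using Iphi c by (intro mult_left_mono) auto
    moreover have "c2 * integral {-1..1} (\<lambda>x. (dPhi \<psi> m x)\<^sup>2) \<le> c2 * (D + \<tau>)" using E c by (intro mult_left_mono) auto
    moreover have "c3 * ((\<psi> 0)\<^sup>2 - \<eta> * (2 * M + 1)) \<le> c3 * (\<phi> 0)\<^sup>2" using P0 c by (intro mult_left_mono) auto
    ultimately show ?thesis by linarith
  qed
  also have "\<dots> = - \<epsilon> + (2 * c1 + c3) * (2 * M + 1) * \<eta> + c2 * \<tau>"
    by (simp add: \<epsilon>_def algebra_simps)
  also have "(2 * c1 + c3) * (2 * M + 1) * \<eta> \<le> K * \<eta>" using \<eta> by (intro mult_right_mono) (auto simp: K_def)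
  finally have "c1 * integral {-1..1} (\<lambda>x. (\<phi> x)\<^sup>2) + c2 * integral {-1..1} (\<lambda>x. (dPhi \<psi> m x)\<^sup>2) - c3 * (\<phi> 0)\<^sup>2 < 0"
    using \<eta>(3) \<tau>(2) \<epsilon> by linarith
  thus ?thesis using H2 by blast
qed

theorem lemma3p8:
  fixes g rho :: real and B :: "'b::euclidean_space"
  assumes "g > 0" and "rho > 0" and "B \<noteq> 0"
  shows
    "(norm B \<ge> Bc g rho \<longrightarrow>
       (\<forall>\<xi>::real. \<forall>\<psi> d\<psi> dd\<psi>. H02_derivs \<psi> d\<psi> dd\<psi> \<longrightarrow>
          E0' g rho (norm B) \<xi> \<psi> d\<psi> \<ge> 0 \<and>
          E0' g rho (norm B) \<xi> \<psi> d\<psi> \<ge>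
            1/2 * (LBINT x=-1..1. ((norm B)\<^sup>2 - (Bc g rho)\<^sup>2) * (d\<psi> x)\<^sup>2
                                   + (norm B)\<^sup>2 * \<xi>\<^sup>2 * (\<psi> x)\<^sup>2))) \<and>
     (norm B < Bc g rho \<longrightarrow>
       (\<forall>\<xi>::real. \<bar>\<xi>\<bar> \<ge> xi_hc g rho (norm B) \<longrightarrow>
          (\<forall>\<psi> d\<psi> dd\<psi>. H02_derivs \<psi> d\<psi> dd\<psi> \<longrightarrow> E0' g rho (norm B) \<xi> \<psi> d\<psi> \<ge> 0))) \<and>
     (norm B < Bc g rho \<longrightarrow>
       (\<forall>\<xi>::real. 0 < \<bar>\<xi>\<bar> \<and> \<bar>\<xi>\<bar> < xi_hc g rho (norm B) \<longrightarrow>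
          (\<exists>\<psi> d\<psi> dd\<psi>. H02_derivs \<psi> d\<psi> dd\<psi> \<and> E0' g rho (norm B) \<xi> \<psi> d\<psi> < 0)))"
proof -
  define b where "b = norm B"
  have bp: "0 < b" using assms(3) by (simp add: b_def)
  note BF = Bc_facts[OF assms(1,2)]
  define SB where "SB = {g * rho * (\<psi> 0)\<^sup>2 / (LBINT x=-1..1. (d\<psi> x)\<^sup>2) | \<psi> d\<psi>. H01_deriv \<psi> d\<psi> \<and> nonzero_on \<psi>}"
  define ST where "ST = {(g * rho * (\<psi> 0)\<^sup>2 - b\<^sup>2 * (LBINT x=-1..1. (d\<psi> x)\<^sup>2))
                          / (b\<^sup>2 * (LBINT x=-1..1. (\<psi> x)\<^sup>2)) | \<psi> d\<psi>. H01_deriv \<psi> d\<psi> \<and> nonzero_on \<psi>}"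
  have SBne: "SB \<noteq> {}" unfolding SB_def using witness_H01 by blast
  have SBb: "bdd_above SB" unfolding SB_def by (rule Bc_bdd[OF assms(1,2)])
  have STb: "bdd_above ST" unfolding ST_def by (rule xi_bdd[OF assms(1,2) bp])
  have Bcsq: "Bc_sq g rho = Sup SB" by (simp add: Bc_sq_def SB_def)
  have Xsq: "xi_hc_sq g rho b = Sup ST" by (simp add: xi_hc_sq_def ST_def)
  have small: "0 \<le> xi_hc_sq g rho b \<and> ST \<noteq> {}" if lt: "b < Bc g rho"
  proof -
    have "b\<^sup>2 < Bc_sq g rho"
    proof (rule ccontr)
      assume "\<not> ?thesis"
      hence "sqrt (Bc_sq g rho) \<le> sqrt (b\<^sup>2)" using real_sqrt_le_mono[of "Bc_sq g rho" "b\<^sup>2"] by linarith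
      thus False using lt bp by (simp add: Bc_def)
    qed
    then obtain r where "r \<in> SB" "b\<^sup>2 < r" using less_cSup_iff[OF SBne SBb] Bcsq by auto
    then obtain \<psi> d where h: "H01_deriv \<psi> d" "nonzero_on \<psi>"
      and r: "b\<^sup>2 < g * rho * (\<psi> 0)\<^sup>2 / integral {-1..1} (\<lambda>x. (d x)\<^sup>2)"
      unfolding SB_def by (auto simp: H01_basic(7))
    have D: "0 < integral {-1..1} (\<lambda>x. (d x)\<^sup>2)" by (rule H01_Dpos[OF h])
    have num: "0 < g * rho * (\<psi> 0)\<^sup>2 - b\<^sup>2 * integral {-1..1} (\<lambda>x. (d x)\<^sup>2)"
      using r D by (simp add: less_divide_eq)
    have mem: "(g * rho * (\<psi> 0)\<^sup>2 - b\<^sup>2 * integral {-1..1} (\<lambda>x. (d x)\<^sup>2)) / (b\<^sup>2 * integral {-1..1} (\<lambda>x. (\<psi> x)\<^sup>2)) \<in> ST"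
      unfolding ST_def using h by (intro CollectI exI[of _ \<psi>] exI[of _ d] conjI) (simp_all add: H01_basic(7)[OF h(1)] H01_Ilbint[OF h(1)])
    have "0 \<le> (g * rho * (\<psi> 0)\<^sup>2 - b\<^sup>2 * integral {-1..1} (\<lambda>x. (d x)\<^sup>2)) / (b\<^sup>2 * integral {-1..1} (\<lambda>x. (\<psi> x)\<^sup>2))"
      using num H01_Inn[OF h(1)] by simp
    also have "\<dots> \<le> Sup ST" by (rule cSup_upper[OF mem STb])
    finally show ?thesis using mem Xsq by auto
  qed
  have P1: "E0' g rho b \<xi> \<psi> d\<psi> \<ge> 0 \<and>
          E0' g rho b \<xi> \<psi> d\<psi> \<ge>
            1/2 * (LBINT x=-1..1. (b\<^sup>2 - (Bc g rho)\<^sup>2) * (d\<psi> x)\<^sup>2 + b\<^sup>2 * \<xi>\<^sup>2 * (\<psi> x)\<^sup>2)"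
    if ge: "b \<ge> Bc g rho" and h2: "H02_derivs \<psi> d\<psi> dd\<psi>" for \<xi> \<psi> d\<psi> dd\<psi>
  proof -
    have h: "H01_deriv \<psi> d\<psi>" using h2 by (simp add: H02_derivs_def)
    define I where "I = integral {-1..1} (\<lambda>x. (\<psi> x)\<^sup>2)"
    define D where "D = integral {-1..1} (\<lambda>x. (d\<psi> x)\<^sup>2)"
    have I0: "0 \<le> I" "0 \<le> D" using H01_Inn[OF h] H01_Dnn[OF h] by (simp_all add: I_def D_def)
    have E: "E0' g rho b \<xi> \<psi> d\<psi> = 1/2 * (b\<^sup>2 * \<xi>\<^sup>2 * I + b\<^sup>2 * D) - 1/2 * g * rho * (\<psi> 0)\<^sup>2"
      using E0'_eq[OF h] by (simp add: I_def D_def)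
    have L: "(LBINT x=-1..1. (b\<^sup>2 - (Bc g rho)\<^sup>2) * (d\<psi> x)\<^sup>2 + b\<^sup>2 * \<xi>\<^sup>2 * (\<psi> x)\<^sup>2) = (b\<^sup>2 - (Bc g rho)\<^sup>2) * D + b\<^sup>2 * \<xi>\<^sup>2 * I"
      using H01_lin[OF h] by (simp add: I_def D_def)
    have G: "g * rho * (\<psi> 0)\<^sup>2 \<le> (Bc g rho)\<^sup>2 * D" using BF(3)[OF h] BF(2) by (simp add: D_def)
    have bb: "(Bc g rho)\<^sup>2 \<le> b\<^sup>2"
    proof -
      have "0 \<le> Bc g rho" by (simp add: Bc_def BF(1))
      thus ?thesis using ge by (simp add: power_mono)
    qed
    have "0 \<le> (b\<^sup>2 - (Bc g rho)\<^sup>2) * D + b\<^sup>2 * \<xi>\<^sup>2 * I" using bb I0 by simp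
    thus ?thesis unfolding E L using G by (simp add: algebra_simps)
  qed
  have P2: "E0' g rho b \<xi> \<psi> d\<psi> \<ge> 0"
    if lt: "b < Bc g rho" and xi: "\<bar>\<xi>\<bar> \<ge> xi_hc g rho b" and h2: "H02_derivs \<psi> d\<psi> dd\<psi>" for \<xi> \<psi> d\<psi> dd\<psi>
  proof -
    have h: "H01_deriv \<psi> d\<psi>" using h2 by (simp add: H02_derivs_def)
    define I where "I = integral {-1..1} (\<lambda>x. (\<psi> x)\<^sup>2)"
    define D where "D = integral {-1..1} (\<lambda>x. (d\<psi> x)\<^sup>2)"
    have I0: "0 \<le> I" "0 \<le> D" using H01_Inn[OF h] H01_Dnn[OF h] by (simp_all add: I_def D_def)
    have E: "E0' g rho b \<xi> \<psi> d\<psi> = 1/2 * (b\<^sup>2 * \<xi>\<^sup>2 * I + b\<^sup>2 * D) - 1/2 * g * rho * (\<psi> 0)\<^sup>2"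
      using E0'_eq[OF h] by (simp add: I_def D_def)
    have X0: "0 \<le> xi_hc_sq g rho b" using small[OF lt] by simp
    have Xle: "xi_hc_sq g rho b \<le> \<xi>\<^sup>2"
    proof -
      have "sqrt (xi_hc_sq g rho b) \<le> \<bar>\<xi>\<bar>" using xi by (simp add: xi_hc_def)
      thus ?thesis using power_mono[of "sqrt (xi_hc_sq g rho b)" "\<bar>\<xi>\<bar>" 2] X0 by simp
    qed
    show ?thesis
    proof (cases "\<psi> 0 = 0")
      case True thus ?thesis unfolding E using I0 by simp
    next
      case False
      hence nz: "nonzero_on \<psi>" by (auto simp: nonzero_on_def intro!: bexI[of _ 0])
      have "I \<noteq> 0" using H01_I0[OF h] False by (auto simp: I_def)
      hence Ip: "0 < b\<^sup>2 * I" using I0 bp by simp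
      have mem: "(g * rho * (\<psi> 0)\<^sup>2 - b\<^sup>2 * D) / (b\<^sup>2 * I) \<in> ST"
        unfolding ST_def using h nz by (intro CollectI exI[of _ \<psi>] exI[of _ d\<psi>] conjI) (simp_all add: H01_basic(7)[OF h] H01_Ilbint[OF h] I_def D_def)
      have "(g * rho * (\<psi> 0)\<^sup>2 - b\<^sup>2 * D) / (b\<^sup>2 * I) \<le> \<xi>\<^sup>2"
        using cSup_upper[OF mem STb] Xsq Xle by simp
      hence "g * rho * (\<psi> 0)\<^sup>2 - b\<^sup>2 * D \<le> \<xi>\<^sup>2 * (b\<^sup>2 * I)" using Ip by (simp add: divide_le_eq)
      thus ?thesis unfolding E by (simp add: algebra_simps)
    qed
  qed
  have P3: "\<exists>\<psi> d\<psi> dd\<psi>. H02_derivs \<psi> d\<psi> dd\<psi> \<and> E0' g rho b \<xi> \<psi> d\<psi> < 0"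
    if lt: "b < Bc g rho" and xi: "0 < \<bar>\<xi>\<bar>" "\<bar>\<xi>\<bar> < xi_hc g rho b" for \<xi>
  proof -
    have X0: "0 \<le> xi_hc_sq g rho b" and STne: "ST \<noteq> {}" using small[OF lt] by simp_all
    have Xlt: "\<xi>\<^sup>2 < xi_hc_sq g rho b"
    proof -
      have "sqrt (\<xi>\<^sup>2) < sqrt (xi_hc_sq g rho b)" using xi by (simp add: xi_hc_def)
      thus ?thesis by (simp only: real_sqrt_less_iff)
    qed
    then obtain r where "r \<in> ST" "\<xi>\<^sup>2 < r" using less_cSup_iff[OF STne STb] Xsq by auto
    then obtain \<psi> d where h: "H01_deriv \<psi> d" "nonzero_on \<psi>"
      and r: "\<xi>\<^sup>2 < (g * rho * (\<psi> 0)\<^sup>2 - b\<^sup>2 * integral {-1..1} (\<lambda>x. (d x)\<^sup>2)) / (b\<^sup>2 * integral {-1..1} (\<lambda>x. (\<psi> x)\<^sup>2))"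
      unfolding ST_def by (auto simp: H01_basic(7) H01_Ilbint)
    have "0 < \<xi>\<^sup>2" using xi by simp
    hence "b\<^sup>2 * integral {-1..1} (\<lambda>x. (\<psi> x)\<^sup>2) \<noteq> 0" using r by auto
    hence Ip: "0 < b\<^sup>2 * integral {-1..1} (\<lambda>x. (\<psi> x)\<^sup>2)" using H01_Inn[OF h(1)] bp by simp
    have "\<xi>\<^sup>2 * (b\<^sup>2 * integral {-1..1} (\<lambda>x. (\<psi> x)\<^sup>2)) < g * rho * (\<psi> 0)\<^sup>2 - b\<^sup>2 * integral {-1..1} (\<lambda>x. (d x)\<^sup>2)"
      using r Ip by (simp add: less_divide_eq)
    hence "(b\<^sup>2 * \<xi>\<^sup>2) * integral {-1..1} (\<lambda>x. (\<psi> x)\<^sup>2) + b\<^sup>2 * integral {-1..1} (\<lambda>x. (d x)\<^sup>2) - (g * rho) * (\<psi> 0)\<^sup>2 < 0"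
      by (simp add: algebra_simps)
    from approx[OF h(1) _ _ _ this] assms(1,2) obtain \<phi> d\<phi> dd\<phi> where
      p: "H02_derivs \<phi> d\<phi> dd\<phi>" and
      q: "(b\<^sup>2 * \<xi>\<^sup>2) * integral {-1..1} (\<lambda>x. (\<phi> x)\<^sup>2) + b\<^sup>2 * integral {-1..1} (\<lambda>x. (d\<phi> x)\<^sup>2) - (g * rho) * (\<phi> 0)\<^sup>2 < 0"
      by auto
    have "H01_deriv \<phi> d\<phi>" using p by (simp add: H02_derivs_def)
    from E0'_eq[OF this, of g rho b \<xi>] q have "E0' g rho b \<xi> \<phi> d\<phi> < 0" by (simp add: algebra_simps)
    thus ?thesis using p by blast
  qed
  show ?thesis unfolding b_def[symmetric] using P1 P2 P3 by blast
qed

end
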